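(* Let $A=\mathbb{k}[x_1,\dots,x_N]$ and let $K_\bullet$ be its Koszul bimodule resolution (defined in the context). Define left $A$-module maps $t_{-1}\colon A\to A\otimes A$ by $t_{-1}(1)=1\otimes 1$, and, for $p\ge 0$, $t_p\colon K_p\to K_{p+1}$ on the left $A$-basis elements $1\otimes(x_{j_1}\wedge\cdots\wedge x_{j_p})\otimes \underline{x}^{\underline{\ell}}$ ($1\le j_1<\cdots<j_p\le N$, $\underline{\ell}\in\mathbb{N}^N$) by $$t_p\big(1\otimes(x_{j_1}\wedge\cdots\wedge x_{j_p})\otimes\underline{x}^{\underline{\ell}}\big)=(-1)^{p+1}\sum_{j_{p+1}=j_p+1}^{N}\ \sum_{r=1}^{\ell_{j_{p+1}}} x_{j_{p+1}}^{\ell_{j_{p+1}}-r}x_{j_{p+1}+1}^{\ell_{j_{p+1}+1}}\cdots x_N^{\ell_N}\otimes(x_{j_1}\wedge\cdots\wedge x_{j_{p+1}})\otimes x_1^{\ell_1}\cdots x_{j_{p+1}-1}^{\ell_{j_{p+1}-1}}x_{j_{p+1}}^{r-1},$$ with the convention $j_0=0$ when $p=0$ (so that $x_{j_1}\wedge\cdots\wedge x_{j_{p+1}}=x_{j_1}$ for $p=0$), and extended left $A$-linearly (the sum is empty, hence $t_p=0$ on such an element, if $j_p=N$). Then $d_0t_{-1}=\mathrm{Id}_A$ and $t_{p-1}d_p+d_{p+1}t_p=\mathrm{Id}_{K_p}$ for all $p\ge 0$; that is, $(t_p)_{p\ge -1}$ is a chain contraction of $K_\bullet$.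
   Context: $\mathbb{k}$ is a field, $V$ is a $\mathbb{k}$-vector space with basis $x_1,\dots,x_N$, and $A=S(V)=\mathbb{k}[x_1,\dots,x_N]$. For $\underline{\ell}=(\ell_1,\dots,\ell_N)\in\mathbb{N}^N$ write $\underline{x}^{\underline{\ell}}=x_1^{\ell_1}\cdots x_N^{\ell_N}$. The Koszul resolution $K_\bullet$ has $K_p=A\otimes\bigwedge^p(V)\otimes A$ ($0\le p\le N$; $K_p=0$ for $p>N$), a free $A$-bimodule with basis $1\otimes(x_{j_1}\wedge\cdots\wedge x_{j_p})\otimes 1$, $1\le j_1<\cdots<j_p\le N$; the augmentation $d_0\colon A\otimes A\to A$ is multiplication, and for $p\ge1$ the $A$-bimodule map $d_p$ is $$d_p(1\otimes(x_{j_1}\wedge\cdots\wedge x_{j_p})\otimes 1)=\sum_{i=1}^p(-1)^{i+1}x_{j_i}\otimes(x_{j_1}\wedge\cdots\widehat{x_{j_i}}\cdots\wedge x_{j_p})\otimes 1-\sum_{i=1}^p(-1)^{i+1}\otimes(x_{j_1}\wedge\cdots\widehat{x_{j_i}}\cdots\wedge x_{j_p})\otimes x_{j_i},$$ where the hat denotes omission. All tensor products are over $\mathbb{k}$. The maps $t_p$ are regarded as maps of complexes of left $A$-modules in the identity $t_{-1}d_0+d_1t_0=\mathrm{Id}$ on $K_0=A\otimes A$. *)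

theory Defs
  imports Main "HOL-Library.Function_Algebras"
begin

text \<open>A monomial x_1^l_1 ... x_N^l_N is an exponent vector
  l :: nat => nat supported in {1..N}. The polynomial ring A = k[x_1..x_N] is the
  k-vector space of finitely supported functions from monomials to k.
  K_p = A (x) Lambda^p V (x) A is the k-vector space with basis the triples
  (a, J, b) (meaning x^a (x) (x_j1 /\ ... /\ x_jp) (x) x^b, with J = {j1 < ... < jp}),
  elements being finitely supported functions on such triples.\<close>

definition monoms :: "nat \<Rightarrow> (nat \<Rightarrow> nat) set" where
  "monoms N = {a. \<forall>i. a i \<noteq> 0 \<longrightarrow> i \<in> {1..N}}"

definition Apoly :: "nat \<Rightarrow> ((nat \<Rightarrow> nat) \<Rightarrow> 'k::field) set" where
  "Apoly N = {f. finite {a. f a \<noteq> 0} \<and> (\<forall>a. f a \<noteq> 0 \<longrightarrow> a \<in> monoms N)}"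

definition Kmod :: "nat \<Rightarrow> nat \<Rightarrow> ((nat \<Rightarrow> nat) \<times> nat set \<times> (nat \<Rightarrow> nat) \<Rightarrow> 'k::field) set" where
  "Kmod N p = {c. finite {y. c y \<noteq> 0} \<and>
     (\<forall>a J b. c (a, J, b) \<noteq> 0 \<longrightarrow> a \<in> monoms N \<and> b \<in> monoms N \<and> J \<subseteq> {1..N} \<and> card J = p)}"

definition lin_ext :: "('b \<Rightarrow> 'c \<Rightarrow> 'k::field) \<Rightarrow> ('b \<Rightarrow> 'k) \<Rightarrow> 'c \<Rightarrow> 'k" where
  "lin_ext g c = (\<lambda>y. \<Sum>b\<in>{b. c b \<noteq> 0}. c b * g b y)"

definition bvec :: "'b \<Rightarrow> 'b \<Rightarrow> 'k::field" where
  "bvec b = (\<lambda>y. if y = b then 1 else 0)"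

definition ue :: "nat \<Rightarrow> nat \<Rightarrow> nat" where
  "ue j = (\<lambda>i. if i = j then 1 else 0)"

definition madd :: "(nat \<Rightarrow> nat) \<Rightarrow> (nat \<Rightarrow> nat) \<Rightarrow> nat \<Rightarrow> nat" where
  "madd a b = (\<lambda>i. a i + b i)"

definition zmono :: "nat \<Rightarrow> nat" where
  "zmono = (\<lambda>_. 0)"

text \<open>Koszul differential d_p (p >= 1) on the basis element x^a (x) x_J (x) x^b
  (bimodule extension of the formula on 1 (x) x_J (x) 1); the position i of j in
  J = {j1<...<jp} is card {j' in J. j' < j} + 1, giving the sign (-1)^(i+1).\<close>
definition kd_basis :: "(nat \<Rightarrow> nat) \<times> nat set \<times> (nat \<Rightarrow> nat)
    \<Rightarrow> (nat \<Rightarrow> nat) \<times> nat set \<times> (nat \<Rightarrow> nat) \<Rightarrow> 'k::field" where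
  "kd_basis x = (case x of (a, J, b) \<Rightarrow> (\<lambda>y. \<Sum>j\<in>J. (-1) ^ card {i\<in>J. i < j} *
       (bvec (madd a (ue j), J - {j}, b) y - bvec (a, J - {j}, madd b (ue j)) y)))"

definition kd :: "((nat \<Rightarrow> nat) \<times> nat set \<times> (nat \<Rightarrow> nat) \<Rightarrow> 'k::field)
    \<Rightarrow> (nat \<Rightarrow> nat) \<times> nat set \<times> (nat \<Rightarrow> nat) \<Rightarrow> 'k" where
  "kd = lin_ext kd_basis"

definition kd0 :: "((nat \<Rightarrow> nat) \<times> nat set \<times> (nat \<Rightarrow> nat) \<Rightarrow> 'k::field)
    \<Rightarrow> (nat \<Rightarrow> nat) \<Rightarrow> 'k" where
  "kd0 = lin_ext (\<lambda>x. case x of (a, J, b) \<Rightarrow> bvec (madd a b))"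

definition tm1 :: "((nat \<Rightarrow> nat) \<Rightarrow> 'k::field)
    \<Rightarrow> (nat \<Rightarrow> nat) \<times> nat set \<times> (nat \<Rightarrow> nat) \<Rightarrow> 'k" where
  "tm1 = lin_ext (\<lambda>a. bvec (a, {}, zmono))"

definition Max0 :: "nat set \<Rightarrow> nat" where
  "Max0 J = (if J = {} then 0 else Max J)"

text \<open>t_p on x^a (x) x_J (x) x^l, i.e. x^a times the left A-basis element
  1 (x) x_J (x) x^l (left A-linear extension), p = card J, j_p = Max0 J
  (convention j_0 = 0).\<close>
definition kt_basis :: "nat \<Rightarrow> (nat \<Rightarrow> nat) \<times> nat set \<times> (nat \<Rightarrow> nat)
    \<Rightarrow> (nat \<Rightarrow> nat) \<times> nat set \<times> (nat \<Rightarrow> nat) \<Rightarrow> 'k::field" where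
  "kt_basis N x = (case x of (a, J, l) \<Rightarrow> (\<lambda>y. (-1) ^ (card J + 1) *
     (\<Sum>m\<in>{Max0 J + 1..N}. \<Sum>r\<in>{1..l m}.
        bvec (madd a (\<lambda>i. if i = m then l m - r else if m < i then l i else 0),
              insert m J,
              (\<lambda>i. if i < m then l i else if i = m then r - 1 else 0)) y)))"

definition kt :: "nat \<Rightarrow> ((nat \<Rightarrow> nat) \<times> nat set \<times> (nat \<Rightarrow> nat) \<Rightarrow> 'k::field)
    \<Rightarrow> (nat \<Rightarrow> nat) \<times> nat set \<times> (nat \<Rightarrow> nat) \<Rightarrow> 'k" where
  "kt N = lin_ext (kt_basis N)"

end

theory Submission imports Defs begin

definition AA :: "(nat\<Rightarrow>nat) \<Rightarrow> nat \<Rightarrow> nat \<Rightarrow> nat \<Rightarrow> nat" where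
  "AA l m r = (\<lambda>i. if i = m then l m - r else if m < i then l i else 0)"
definition BB :: "(nat\<Rightarrow>nat) \<Rightarrow> nat \<Rightarrow> nat \<Rightarrow> nat \<Rightarrow> nat" where
  "BB l m r = (\<lambda>i. if i < m then l i else if i = m then r - 1 else 0)"
definition QQ :: "(nat\<Rightarrow>nat) \<Rightarrow> nat \<Rightarrow> nat \<Rightarrow> nat \<Rightarrow> nat" where
  "QQ l m r = (\<lambda>i. if i < m then l i else if i = m then r else 0)"
definition HH :: "(nat\<Rightarrow>nat) \<Rightarrow> (nat\<Rightarrow>nat) \<Rightarrow> nat \<Rightarrow> nat set \<Rightarrow> _ \<Rightarrow> 'k::field" where
  "HH a l M J = bvec (madd a (\<lambda>i. if M < i then l i else 0), J, (\<lambda>i. if i \<le> M then l i else 0))"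

lemma lin_ext_superset:
  assumes "finite T" "{b. c b \<noteq> 0} \<subseteq> T"
  shows "lin_ext g c y = (\<Sum>t\<in>T. c t * g t y)"
  unfolding lin_ext_def
  by (rule sum.mono_neutral_left) (use assms in auto)

lemma lin_ext_lin:
  assumes "finite S" "\<And>b. b \<in> S \<Longrightarrow> finite {y. h b y \<noteq> 0}"
  shows "lin_ext g (\<lambda>y. \<Sum>b\<in>S. w b * h b y) y' = (\<Sum>b\<in>S. w b * lin_ext g (h b) y')"
proof -
  define T where "T = (\<Union>b\<in>S. {y. h b y \<noteq> 0})"
  have fT: "finite T" using assms unfolding T_def by auto
  have sub: "{y. (\<Sum>b\<in>S. w b * h b y) \<noteq> 0} \<subseteq> T"
  proof
    fix y assume "y \<in> {y. (\<Sum>b\<in>S. w b * h b y) \<noteq> 0}"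
    then obtain b where "b \<in> S" "w b * h b y \<noteq> 0" by (auto elim: sum.not_neutral_contains_not_neutral)
    then show "y \<in> T" unfolding T_def by auto
  qed
  have "lin_ext g (\<lambda>y. \<Sum>b\<in>S. w b * h b y) y' = (\<Sum>t\<in>T. (\<Sum>b\<in>S. w b * h b t) * g t y')"
    by (rule lin_ext_superset[OF fT sub])
  also have "\<dots> = (\<Sum>b\<in>S. w b * (\<Sum>t\<in>T. h b t * g t y'))"
    by (simp only: sum_distrib_left sum_distrib_right mult.assoc) (rule sum.swap)
  also have "\<dots> = (\<Sum>b\<in>S. w b * lin_ext g (h b) y')"
  proof (rule sum.cong[OF refl])
    fix b assume "b \<in> S"
    then have "{y. h b y \<noteq> 0} \<subseteq> T" unfolding T_def by auto
    then show "w b * (\<Sum>t\<in>T. h b t * g t y') = w b * lin_ext g (h b) y'"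
      using lin_ext_superset[OF fT, of "h b" g y'] by simp
  qed
  finally show ?thesis .
qed

lemma lin_ext_bvec: "lin_ext g (bvec x) y = g x y"
  by (subst lin_ext_superset[of "{x}"]) (auto simp: bvec_def)

lemma lin_ext_bvec_diff: "lin_ext g (\<lambda>y. bvec u y - bvec v y) y' = g u y' - g v y'"
proof (cases "u = v")
  case True
  then show ?thesis by (simp add: lin_ext_def)
next
  case False
  then show ?thesis
    by (subst lin_ext_superset[of "{u,v}"]) (auto simp: bvec_def)
qed

lemma fin_bvec: "finite {y. (bvec x :: _ \<Rightarrow> 'k::field) y \<noteq> 0}"
  by (rule finite_subset[of _ "{x}"]) (auto simp: bvec_def)

lemma fin_sum:
  assumes "\<And>i. i \<in> I \<Longrightarrow> finite {y. (h i y :: 'k::field) \<noteq> 0}"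
  shows "finite {y. (\<Sum>i\<in>I. h i y) \<noteq> 0}"
proof (cases "finite I")
  case True
  show ?thesis
  proof (rule finite_subset[of _ "\<Union>i\<in>I. {y. h i y \<noteq> 0}"])
    show "{y. (\<Sum>i\<in>I. h i y) \<noteq> 0} \<subseteq> (\<Union>i\<in>I. {y. h i y \<noteq> 0})"
      by (auto elim: sum.not_neutral_contains_not_neutral)
  qed (use True assms in auto)
qed simp

lemma fin_scale_diff:
  "finite {y. (w * (bvec u y - bvec v y) :: 'k::field) \<noteq> 0}"
  by (rule finite_subset[of _ "{u,v}"]) (auto simp: bvec_def)

lemma fin_kd_basis: "finite {y. (kd_basis x :: _ \<Rightarrow> 'k::field) y \<noteq> 0}"
  unfolding kd_basis_def by (cases x) (auto intro!: fin_sum fin_scale_diff)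

lemma fin_kt_basis: "finite {y. (kt_basis N x :: _ \<Rightarrow> 'k::field) y \<noteq> 0}"
proof -
  obtain a J l where x: "x = (a,J,l)" by (cases x) auto
  show ?thesis unfolding kt_basis_def x
    apply simp
    apply (rule finite_subset[OF _ fin_sum[of "{Max0 J + 1..N}"]])
     apply force
    apply (rule fin_sum)
    apply (rule fin_bvec)
    done
qed


lemma kt_basis_eq: "kt_basis N (a,J,l) y = (-1)^(card J+1) *
  (\<Sum>m\<in>{Max0 J+1..N}. \<Sum>r\<in>{1..l m}. bvec (madd a (AA l m r), insert m J, BB l m r) y)"
  unfolding kt_basis_def AA_def BB_def by simp

lemma tel1: "(\<Sum>r\<in>{1..n}. f (r-1) - f r) = f 0 - (f (n::nat) :: 'a::ab_group_add)"
  by (induction n) auto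

lemma tel2: "M \<le> N \<Longrightarrow> (\<Sum>m\<in>{M+1..N}. f (m-1) - f m) = f M - (f (N::nat) :: 'a::ab_group_add)"
proof (induction N)
  case 0 then show ?case by simp
next
  case (Suc N)
  show ?case
  proof (cases "M = Suc N")
    case True then show ?thesis by simp
  next
    case False
    then have "M \<le> N" using Suc by simp
    then show ?thesis using Suc by (simp add: atLeastAtMostSuc_conv)
  qed
qed

lemma Tel:
  assumes l: "\<forall>i>N. l i = 0" and MN: "M \<le> N"
  shows "(\<Sum>m\<in>{M+1..N}. \<Sum>r\<in>{1..l m}.
     (bvec (madd (madd a (AA l m r)) (ue m), J, BB l m r) y
      - bvec (madd a (AA l m r), J, madd (BB l m r) (ue m)) y :: 'k::field))
   = HH a l M J y - bvec (a,J,l) y"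
proof -
  define g where "g m r = (bvec (madd a (AA l m r), J, QQ l m r) y :: 'k)" for m r
  have inner: "(\<Sum>r\<in>{1..l m}.
     (bvec (madd (madd a (AA l m r)) (ue m), J, BB l m r) y
      - bvec (madd a (AA l m r), J, madd (BB l m r) (ue m)) y :: 'k))
     = HH a l (m-1) J y - HH a l m J y" if "m \<ge> 1" for m
  proof -
    have "(\<Sum>r\<in>{1..l m}.
     (bvec (madd (madd a (AA l m r)) (ue m), J, BB l m r) y
      - bvec (madd a (AA l m r), J, madd (BB l m r) (ue m)) y :: 'k))
      = (\<Sum>r\<in>{1..l m}. g m (r-1) - g m r)"
    proof (rule sum.cong[OF refl])
      fix r assume r: "r \<in> {1..l m}"
      have e1: "madd (madd a (AA l m r)) (ue m) = madd a (AA l m (r-1))"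
        using r by (auto simp: fun_eq_iff madd_def AA_def ue_def)
      have e2: "BB l m r = QQ l m (r-1)"
        by (auto simp: fun_eq_iff BB_def QQ_def)
      have e3: "madd (QQ l m (r-1)) (ue m) = QQ l m r"
        using r by (auto simp: fun_eq_iff madd_def QQ_def ue_def)
      show "bvec (madd (madd a (AA l m r)) (ue m), J, BB l m r) y
      - bvec (madd a (AA l m r), J, madd (BB l m r) (ue m)) y = g m (r-1) - g m r"
        unfolding g_def e1 e2 e3 by (rule refl)
    qed
    also have "\<dots> = g m 0 - g m (l m)" by (rule tel1)
    also have "g m 0 = HH a l (m-1) J y"
      unfolding g_def HH_def using that
      by (intro arg_cong[where f="\<lambda>x. bvec x y"]) (auto simp: fun_eq_iff madd_def AA_def QQ_def)
    also have "g m (l m) = HH a l m J y"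
      unfolding g_def HH_def
      by (intro arg_cong[where f="\<lambda>x. bvec x y"]) (auto simp: fun_eq_iff madd_def AA_def QQ_def)
    finally show ?thesis .
  qed
  have "(\<Sum>m\<in>{M+1..N}. \<Sum>r\<in>{1..l m}.
     (bvec (madd (madd a (AA l m r)) (ue m), J, BB l m r) y
      - bvec (madd a (AA l m r), J, madd (BB l m r) (ue m)) y :: 'k))
     = (\<Sum>m\<in>{M+1..N}. HH a l (m-1) J y - HH a l m J y)"
    by (rule sum.cong[OF refl]) (rule inner, simp)
  also have "\<dots> = HH a l M J y - HH a l N J y" by (rule tel2[OF MN])
  also have "HH a l N J y = bvec (a,J,l) y"
    unfolding HH_def using l
    by (intro arg_cong[where f="\<lambda>x. bvec x y"]) (auto simp: fun_eq_iff madd_def)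
  finally show ?thesis .
qed

definition XX :: "(nat\<Rightarrow>nat) \<Rightarrow> (nat\<Rightarrow>nat) \<Rightarrow> nat set \<Rightarrow> nat \<Rightarrow> nat \<Rightarrow> nat \<Rightarrow> _ \<Rightarrow> 'k::field" where
  "XX a l J j m r y = bvec (madd (madd a (AA l m r)) (ue j), insert m J - {j}, BB l m r) y
     - bvec (madd a (AA l m r), insert m J - {j}, madd (BB l m r) (ue j)) y"

lemma C1:
  assumes fJ: "finite J" and JN: "J \<subseteq> {1..N}" and j: "j \<in> J"
  shows "kt_basis N (madd a (ue j), J-{j}, l) y - kt_basis N (a, J-{j}, madd l (ue j)) y
    = (-1)^card J * (\<Sum>m\<in>{Max J+1..N}. \<Sum>r\<in>{1..l m}. (XX a l J j m r y :: 'k::field))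
      + (if j = Max J then - ((-1)^card J * HH a l (Max J) J y) else 0)"
proof -
  define M where "M = Max J"
  have Jne: "J \<noteq> {}" using j by auto
  have MJ: "M \<in> J" unfolding M_def using fJ Jne by simp
  have leM: "i \<in> J \<Longrightarrow> i \<le> M" for i unfolding M_def using fJ by simp
  have MN: "M \<le> N" using MJ JN by auto
  have cj: "card (J - {j}) + 1 = card J" using fJ j
    by (simp add: card_Diff_singleton) (metis Suc_pred card_gt_0_iff j empty_iff)
  define l' where "l' = madd l (ue j)"
  define S1 where "S1 m = (\<Sum>r\<in>{1..l m}. bvec (madd (madd a (ue j)) (AA l m r), insert m (J-{j}), BB l m r) y :: 'k)" for m
  define S2 where "S2 m = (\<Sum>r\<in>{1..l' m}. bvec (madd a (AA l' m r), insert m (J-{j}), BB l' m r) y :: 'k)" for m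
  have diff: "kt_basis N (madd a (ue j), J-{j}, l) y - kt_basis N (a, J-{j}, madd l (ue j)) y
     = (-1)^card J * (\<Sum>m\<in>{Max0 (J-{j})+1..N}. S1 m - S2 m)"
    unfolding kt_basis_eq S1_def S2_def l'_def cj sum_subtractf by (simp add: algebra_simps)
  have big: "S1 m - S2 m = (\<Sum>r\<in>{1..l m}. XX a l J j m r y)" if m: "M < m" for m
  proof -
    have jm: "j < m" using leM[OF j] m by simp
    have "l' m = l m" using jm by (simp add: l'_def madd_def ue_def)
    then have "S2 m = (\<Sum>r\<in>{1..l m}. bvec (madd a (AA l' m r), insert m (J-{j}), BB l' m r) y)"
      unfolding S2_def by simp
    also have "\<dots> = (\<Sum>r\<in>{1..l m}. bvec (madd a (AA l m r), insert m J - {j}, madd (BB l m r) (ue j)) y)"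
    proof (rule sum.cong[OF refl])
      fix r
      have "AA l' m r = AA l m r" using jm by (auto simp: fun_eq_iff AA_def l'_def madd_def ue_def)
      moreover have "BB l' m r = madd (BB l m r) (ue j)" using jm
        by (auto simp: fun_eq_iff BB_def l'_def madd_def ue_def)
      moreover have "insert m (J-{j}) = insert m J - {j}" using jm by auto
      ultimately show "bvec (madd a (AA l' m r), insert m (J-{j}), BB l' m r) y
        = bvec (madd a (AA l m r), insert m J - {j}, madd (BB l m r) (ue j)) y" by simp
    qed
    finally have s2: "S2 m = \<dots>" .
    have s1: "S1 m = (\<Sum>r\<in>{1..l m}. bvec (madd (madd a (AA l m r)) (ue j), insert m J - {j}, BB l m r) y)"
    proof -
      have "madd (madd a (ue j)) (AA l m r) = madd (madd a (AA l m r)) (ue j)" for r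
        by (auto simp: fun_eq_iff madd_def)
      moreover have "insert m (J-{j}) = insert m J - {j}" using jm by auto
      ultimately show ?thesis unfolding S1_def by simp
    qed
    show ?thesis unfolding s1 s2 XX_def sum_subtractf ..
  qed
  show ?thesis
  proof (cases "j = M")
    case False
    have "Max0 (J - {j}) = M"
      unfolding Max0_def using MJ False leM fJ by (auto intro!: Max_eqI)
    then show ?thesis using False unfolding diff M_def[symmetric]
      by (simp add: big)
  next
    case True
    define M' where "M' = Max0 (J - {M})"
    have M'M: "M' < M"
    proof (cases "J - {M} = {}")
      case True then show ?thesis unfolding M'_def Max0_def using MJ JN by auto
    next
      case False
      have "Max (J - {M}) \<in> J - {M}" using fJ False by (intro Max_in) auto
      then have "Max (J - {M}) < M" using leM by force
      then show ?thesis unfolding M'_def Max0_def using False by simp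
    qed
    have split: "{M'+1..N} = {M'+1..<M} \<union> ({M} \<union> {M+1..N})" using M'M MN by auto
    have z: "S1 m - S2 m = 0" if "m \<in> {M'+1..<M}" for m
    proof -
      have mM: "m < M" using that by simp
      have "l' m = l m" using mM True by (simp add: l'_def madd_def ue_def)
      moreover have "madd (madd a (ue j)) (AA l m r) = madd a (AA l' m r)" for r
        using mM True by (auto simp: fun_eq_iff AA_def l'_def madd_def ue_def)
      moreover have "BB l' m r = BB l m r" for r
        using mM True by (auto simp: fun_eq_iff BB_def l'_def madd_def ue_def)
      ultimately show ?thesis unfolding S1_def S2_def by simp
    qed
    have atM: "S1 M - S2 M = - HH a l M J y"
    proof -
      have lM: "l' M = Suc (l M)" using True by (simp add: l'_def madd_def ue_def)
      have ins: "insert M (J - {j}) = J" using True MJ by auto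
      have "S2 M = (\<Sum>r\<in>{1..l M}. bvec (madd a (AA l' M r), J, BB l' M r) y)
          + bvec (madd a (AA l' M (Suc (l M))), J, BB l' M (Suc (l M))) y"
        unfolding S2_def lM ins by simp
      also have "bvec (madd a (AA l' M (Suc (l M))), J, BB l' M (Suc (l M))) y = HH a l M J y"
        unfolding HH_def using True
        by (intro arg_cong[where f="\<lambda>x. bvec x y"]) (auto simp: fun_eq_iff madd_def AA_def BB_def l'_def ue_def)
      also have "(\<Sum>r\<in>{1..l M}. bvec (madd a (AA l' M r), J, BB l' M r) y) = S1 M"
        unfolding S1_def ins
      proof (rule sum.cong[OF refl])
        fix r assume r: "r \<in> {1..l M}"
        have "madd a (AA l' M r) = madd (madd a (ue j)) (AA l M r)"
          using r True by (auto simp: fun_eq_iff AA_def l'_def madd_def ue_def)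
        moreover have "BB l' M r = BB l M r"
          using True by (auto simp: fun_eq_iff BB_def l'_def madd_def ue_def)
        ultimately show "bvec (madd a (AA l' M r), J, BB l' M r) y = bvec (madd (madd a (ue j)) (AA l M r), J, BB l M r) y"
          by simp
      qed
      finally show ?thesis by simp
    qed
    have E: "(\<Sum>m\<in>{M'+1..N}. S1 m - S2 m) = (\<Sum>m\<in>{M'+1..<M}. S1 m - S2 m) + ((S1 M - S2 M) + (\<Sum>m\<in>{M+1..N}. S1 m - S2 m))"
      unfolding split by (subst sum.union_disjoint, auto)+
    also have "\<dots> = - HH a l M J y + (\<Sum>m\<in>{M+1..N}. \<Sum>r\<in>{1..l m}. XX a l J j m r y)"
      using z atM big by simp
    finally have E: "(\<Sum>m\<in>{M'+1..N}. S1 m - S2 m) = \<dots>" .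
    have "Max0 (J - {j}) = M'" using True M'_def by simp
    then have "kt_basis N (madd a (ue j), J-{j}, l) y - kt_basis N (a, J-{j}, madd l (ue j)) y
       = (-1)^card J * (- HH a l M J y + (\<Sum>m\<in>{M+1..N}. \<Sum>r\<in>{1..l m}. (XX a l J j m r y :: 'k)))"
      using diff E by simp
    then show ?thesis using True unfolding M_def by (simp add: algebra_simps)
  qed
qed


lemma kt_fun: "kt_basis N (a,J,l) = (\<lambda>y. \<Sum>mr\<in>Sigma {Max0 J+1..N} (\<lambda>m. {1..l m}).
   (-1)^(card J+1) * bvec (madd a (AA l (fst mr) (snd mr)), insert (fst mr) J, BB l (fst mr) (snd mr)) y)"
proof (rule ext)
  fix y
  have "kt_basis N (a,J,l) y = (\<Sum>m\<in>{Max0 J+1..N}. \<Sum>r\<in>{1..l m}. (-1)^(card J+1) * bvec (madd a (AA l m r), insert m J, BB l m r) y)"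
    by (simp only: kt_basis_eq sum_distrib_left)
  also have "\<dots> = (\<Sum>mr\<in>Sigma {Max0 J+1..N} (\<lambda>m. {1..l m}).
   (-1)^(card J+1) * bvec (madd a (AA l (fst mr) (snd mr)), insert (fst mr) J, BB l (fst mr) (snd mr)) y)"
    by (subst sum.Sigma) (auto simp: prod.case_eq_if)
  finally show "kt_basis N (a,J,l) y = \<dots>" .
qed

lemma kd_insert:
  assumes fJ: "finite J" and m: "\<forall>i\<in>J. i < m"
  shows "kd_basis (A, insert m J, B) y = (-1)^card J * (bvec (madd A (ue m), J, B) y - bvec (A, J, madd B (ue m)) y)
     + (\<Sum>j\<in>J. (-1)^card {i\<in>J. i<j} * (bvec (madd A (ue j), insert m J - {j}, B) y - bvec (A, insert m J - {j}, madd B (ue j)) y) :: 'k::field)"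
proof -
  have mJ: "m \<notin> J" using m by auto
  have c1: "{i \<in> insert m J. i < m} = J" using m by auto
  have c2: "{i \<in> insert m J. i < j} = {i\<in>J. i<j}" if "j \<in> J" for j using m that by auto
  have c3: "insert m J - {m} = J" using mJ by auto
  have "kd_basis (A, insert m J, B) y = (\<Sum>j\<in>insert m J. (-1)^card {i\<in>insert m J. i<j} *
       (bvec (madd A (ue j), insert m J - {j}, B) y - bvec (A, insert m J - {j}, madd B (ue j)) y) :: 'k)"
    unfolding kd_basis_def by (simp only: prod.case)
  also have "\<dots> = (-1)^card {i\<in>insert m J. i<m} *
       (bvec (madd A (ue m), insert m J - {m}, B) y - bvec (A, insert m J - {m}, madd B (ue m)) y)
     + (\<Sum>j\<in>J. (-1)^card {i\<in>insert m J. i<j} *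
       (bvec (madd A (ue j), insert m J - {j}, B) y - bvec (A, insert m J - {j}, madd B (ue j)) y))"
    by (rule sum.insert[OF fJ mJ])
  also have "(\<Sum>j\<in>J. (-1)^card {i\<in>insert m J. i<j} *
       (bvec (madd A (ue j), insert m J - {j}, B) y - bvec (A, insert m J - {j}, madd B (ue j)) y))
     = (\<Sum>j\<in>J. (-1)^card {i\<in>J. i<j} *
       (bvec (madd A (ue j), insert m J - {j}, B) y - bvec (A, insert m J - {j}, madd B (ue j)) y) :: 'k)"
    by (rule sum.cong[OF refl]) (simp only: c2)
  finally show ?thesis unfolding c1 c3 .
qed

lemma LHS2:
  assumes fJ: "finite J" and JN: "J \<subseteq> {1..N}" and l: "\<forall>i>N. l i = 0"
  shows "kd (kt_basis N (a,J,l)) y = (-1)^(card J+1) * ((-1)^card J * (HH a l (Max0 J) J y - bvec (a,J,l) y)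
     + (\<Sum>m\<in>{Max0 J+1..N}. \<Sum>r\<in>{1..l m}. \<Sum>j\<in>J. (-1)^card {i\<in>J. i<j} * (XX a l J j m r y :: 'k::field)))"
proof -
  have M0N: "Max0 J \<le> N"
  proof (cases "J = {}")
    case False
    then have "Max J \<in> J" using fJ by simp
    then show ?thesis unfolding Max0_def using False JN by auto
  qed (simp add: Max0_def)
  have lt: "\<forall>i\<in>J. i < m" if "Max0 J < m" for m
    using that fJ unfolding Max0_def by (auto split: if_splits)
  have "kd (kt_basis N (a,J,l)) y = (\<Sum>mr\<in>Sigma {Max0 J+1..N} (\<lambda>m. {1..l m}).
     (-1)^(card J+1) * kd_basis (madd a (AA l (fst mr) (snd mr)), insert (fst mr) J, BB l (fst mr) (snd mr)) y)"
    unfolding kt_fun kd_def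
    by (subst lin_ext_lin) (auto simp: fin_bvec lin_ext_bvec)
  also have "\<dots> = (-1)^(card J+1) * (\<Sum>m\<in>{Max0 J+1..N}. \<Sum>r\<in>{1..l m}.
       kd_basis (madd a (AA l m r), insert m J, BB l m r) y)"
    by (subst sum.Sigma) (auto simp: sum_distrib_left prod.case_eq_if)
  also have "(\<Sum>m\<in>{Max0 J+1..N}. \<Sum>r\<in>{1..l m}. kd_basis (madd a (AA l m r), insert m J, BB l m r) y)
     = (\<Sum>m\<in>{Max0 J+1..N}. \<Sum>r\<in>{1..l m}. (-1)^card J *
          (bvec (madd (madd a (AA l m r)) (ue m), J, BB l m r) y - bvec (madd a (AA l m r), J, madd (BB l m r) (ue m)) y)
        + (\<Sum>j\<in>J. (-1)^card {i\<in>J. i<j} * (XX a l J j m r y :: 'k)))"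
    unfolding XX_def
  proof (rule sum.cong[OF refl], rule sum.cong[OF refl])
    fix m r assume "m \<in> {Max0 J+1..N}"
    then have "\<forall>i\<in>J. i < m" using lt by simp
    then show "kd_basis (madd a (AA l m r), insert m J, BB l m r) y = (-1)^card J *
          (bvec (madd (madd a (AA l m r)) (ue m), J, BB l m r) y - bvec (madd a (AA l m r), J, madd (BB l m r) (ue m)) y)
        + (\<Sum>j\<in>J. (-1)^card {i\<in>J. i<j} * (bvec (madd (madd a (AA l m r)) (ue j), insert m J - {j}, BB l m r) y
     - bvec (madd a (AA l m r), insert m J - {j}, madd (BB l m r) (ue j)) y))"
      by (rule kd_insert[OF fJ])
  qed
  also have "\<dots> = (\<Sum>m\<in>{Max0 J+1..N}. \<Sum>r\<in>{1..l m}. (-1)^card J *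
          (bvec (madd (madd a (AA l m r)) (ue m), J, BB l m r) y - bvec (madd a (AA l m r), J, madd (BB l m r) (ue m)) y))
        + (\<Sum>m\<in>{Max0 J+1..N}. \<Sum>r\<in>{1..l m}. \<Sum>j\<in>J. (-1)^card {i\<in>J. i<j} * (XX a l J j m r y :: 'k))"
    by (simp only: sum.distrib)
  also have "(\<Sum>m\<in>{Max0 J+1..N}. \<Sum>r\<in>{1..l m}. (-1)^card J *
          (bvec (madd (madd a (AA l m r)) (ue m), J, BB l m r) y - bvec (madd a (AA l m r), J, madd (BB l m r) (ue m)) y))
     = (-1)^card J * (\<Sum>m\<in>{Max0 J+1..N}. \<Sum>r\<in>{1..l m}.
          (bvec (madd (madd a (AA l m r)) (ue m), J, BB l m r) y - bvec (madd a (AA l m r), J, madd (BB l m r) (ue m)) y :: 'k))"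
    by (simp only: sum_distrib_left)
  also note Tel[OF l M0N, of a J y]
  finally show ?thesis .
qed

lemma lin_ext_kd:
  assumes "finite J"
  shows "lin_ext g (\<lambda>y. \<Sum>j\<in>J. s j * (bvec (u j) y - bvec (v j) y)) y'
    = (\<Sum>j\<in>J. s j * (g (u j) y' - g (v j) y') :: 'k::field)"
proof -
  have f: "finite {y. bvec (u j) y - (bvec (v j) y :: 'k) \<noteq> 0}" for j
    by (rule finite_subset[of _ "{u j, v j}"]) (auto simp: bvec_def)
  have "lin_ext g (\<lambda>y. \<Sum>j\<in>J. s j * (\<lambda>j y. bvec (u j) y - bvec (v j) y) j y) y'
     = (\<Sum>j\<in>J. s j * lin_ext g ((\<lambda>j y. bvec (u j) y - bvec (v j) y) j) y')"
    by (rule lin_ext_lin[OF assms, where h="\<lambda>j y. bvec (u j) y - bvec (v j) y" and g=g and w=s and y'=y']) (rule f)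
  also have "\<dots> = (\<Sum>j\<in>J. s j * (g (u j) y' - g (v j) y'))"
    by (rule sum.cong[OF refl]) (simp only: lin_ext_bvec_diff)
  finally show ?thesis .
qed

lemma LHS1:
  assumes fJ: "finite J"
  shows "kt N (kd_basis (a,J,l)) y = (\<Sum>j\<in>J. (-1)^card {i\<in>J. i<j} *
     (kt_basis N (madd a (ue j), J-{j}, l) y - kt_basis N (a, J-{j}, madd l (ue j)) y) :: 'k::field)"
proof -
  have e: "kd_basis (a,J,l) = (\<lambda>y. \<Sum>j\<in>J. (-1)^card {i\<in>J. i<j} * (bvec (madd a (ue j), J - {j}, l) y - bvec (a, J - {j}, madd l (ue j)) y) :: 'k)"
    unfolding kd_basis_def by (simp only: prod.case)
  show ?thesis unfolding kt_def e
    using lin_ext_kd[OF fJ, where g="kt_basis N" and s="\<lambda>j. (-1)^card {i\<in>J. i<j}"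
      and u="\<lambda>j. (madd a (ue j), J-{j}, l)" and v="\<lambda>j. (a, J-{j}, madd l (ue j))" and y'=y]
    by (simp only:)
qed


lemma sign_alg:
  fixes u :: "'k::field"
  assumes "u * u = 1"
  shows "(- u * T + H) + u * (- u * (H - b) + T) = b"
proof -
  have "(- u * T + H) + u * (- u * (H - b) + T) = H - (u * u) * (H - b)"
    by (simp add: algebra_simps)
  then show ?thesis using assms by simp
qed

lemma BI3:
  assumes fJ: "finite J" and JN: "J \<subseteq> {1..N}" and Jne: "J \<noteq> {}" and l: "\<forall>i>N. l i = 0"
  shows "kt N (kd_basis (a,J,l)) y + kd (kt_basis N (a,J,l)) y = (bvec (a,J,l) y :: 'k::field)"
proof -
  define M where "M = Max J"
  define p where "p = card J"
  obtain q where pq: "p = Suc q" using Jne fJ unfolding p_def by (cases "card J") auto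
  define u where "u = ((-1)::'k)^q"
  have uu: "u * u = 1" unfolding u_def by (simp flip: power_add add: power_mult_distrib[symmetric] mult_2[symmetric] power_mult)
  have MJ: "M \<in> J" unfolding M_def using fJ Jne by simp
  have M0: "Max0 J = M" unfolding Max0_def M_def using Jne by simp
  define \<sigma> where "\<sigma> j = ((-1)::'k)^card {i\<in>J. i<j}" for j
  define SX where "SX j = (\<Sum>m\<in>{M+1..N}. \<Sum>r\<in>{1..l m}. (XX a l J j m r y :: 'k))" for j
  define H where "H = (HH a l M J y :: 'k)"
  have sM: "\<sigma> M = u"
  proof -
    have "{i\<in>J. i<M} = J - {M}" using Max_ge[OF fJ] unfolding M_def by (auto simp: order_less_le)
    then have "card {i\<in>J. i<M} = q" using MJ fJ pq unfolding p_def by simp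
    then show ?thesis unfolding \<sigma>_def u_def by simp
  qed
  have "kt N (kd_basis (a,J,l)) y = (\<Sum>j\<in>J. \<sigma> j * ((-1)^p * SX j + (if j = M then - ((-1)^p * H) else 0)))"
    unfolding LHS1[OF fJ] \<sigma>_def SX_def H_def p_def M_def
    by (rule sum.cong[OF refl]) (simp only: C1[OF fJ JN])
  also have "\<dots> = (-1)^p * (\<Sum>j\<in>J. \<sigma> j * SX j) + \<sigma> M * (- ((-1)^p * H))"
  proof -
    have e: "\<sigma> j * ((-1)^p * SX j + (if j = M then - ((-1)^p * H) else 0))
       = (-1)^p * (\<sigma> j * SX j) + (if j = M then \<sigma> M * (- ((-1)^p * H)) else 0)" for j
      by (cases "j = M") (simp_all add: algebra_simps)
    show ?thesis unfolding e sum.distrib sum_distrib_left[symmetric] using fJ MJ by (simp only: sum.delta if_True)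
  qed
  also have "\<dots> = - u * (\<Sum>j\<in>J. \<sigma> j * SX j) + H"
    using uu unfolding sM pq u_def by (simp add: algebra_simps)
  finally have L1: "kt N (kd_basis (a,J,l)) y = - u * (\<Sum>j\<in>J. \<sigma> j * SX j) + H" .
  have sw: "(\<Sum>m\<in>{M+1..N}. \<Sum>r\<in>{1..l m}. \<Sum>j\<in>J. \<sigma> j * XX a l J j m r y) = (\<Sum>j\<in>J. \<sigma> j * SX j)"
    unfolding SX_def sum_distrib_left
    by (subst sum.swap) (rule sum.cong[OF refl], rule sum.swap)
  have "kd (kt_basis N (a,J,l)) y = (-1)^(p+1) * ((-1)^p * (H - bvec (a,J,l) y) + (\<Sum>j\<in>J. \<sigma> j * SX j))"
    unfolding LHS2[OF fJ JN l] M0 p_def[symmetric] H_def[symmetric] sw[unfolded \<sigma>_def] \<sigma>_def ..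
  also have "\<dots> = u * (- u * (H - bvec (a,J,l) y) + (\<Sum>j\<in>J. \<sigma> j * SX j))"
    unfolding pq u_def by simp
  finally have L2: "kd (kt_basis N (a,J,l)) y = \<dots>" .
  show ?thesis unfolding L1 L2 by (rule sign_alg[OF uu])
qed


lemma comp_lin:
  assumes "finite {b. c b \<noteq> 0}" "\<And>b. finite {z. (h b z :: 'k::field) \<noteq> 0}"
  shows "lin_ext g (lin_ext h c) y = (\<Sum>b\<in>{b. c b \<noteq> 0}. c b * lin_ext g (h b) y)"
  unfolding lin_ext_def[of h c] by (rule lin_ext_lin[OF assms(1)]) (rule assms(2))

lemma sum_bvec:
  assumes "finite S" "{b. c b \<noteq> 0} \<subseteq> S"
  shows "(\<Sum>b\<in>S. c b * bvec b y) = (c y :: 'k::field)"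
proof -
  have "(\<Sum>b\<in>S. c b * bvec b y) = (\<Sum>b\<in>S. if y = b then c y else 0)"
    by (rule sum.cong) (auto simp: bvec_def)
  also have "\<dots> = c y" using assms by (auto simp: sum.delta)
  finally show ?thesis .
qed

lemma BI2:
  assumes l: "\<forall>i>N. l i = 0" and l0: "l 0 = 0"
  shows "bvec (madd a l, {}, zmono) y + kd (kt_basis N (a,{},l)) y = (bvec (a,{},l) y :: 'k::field)"
proof -
  have "HH a l 0 {} y = (bvec (madd a l, {}, zmono) y :: 'k)"
    unfolding HH_def using l0
    by (intro arg_cong[where f="\<lambda>x. bvec x y"]) (auto simp: fun_eq_iff madd_def zmono_def)
  moreover have "kd (kt_basis N (a,{},l)) y = (bvec (a,{},l) y :: 'k) - HH a l 0 {} y"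
    using LHS2[of "{}" N l a y] l by (simp add: Max0_def)
  ultimately show ?thesis by simp
qed

lemma monomsD: "l \<in> monoms N \<Longrightarrow> (\<forall>i>N. l i = 0) \<and> l 0 = 0"
  unfolding monoms_def by force

theorem mainTheorem2:
  fixes N :: nat
  shows "(\<forall>f \<in> (Apoly N :: ((nat \<Rightarrow> nat) \<Rightarrow> 'k::field) set). kd0 (tm1 f) = f)
    \<and> (\<forall>c \<in> (Kmod N 0 :: (_ \<Rightarrow> 'k) set). tm1 (kd0 c) + kd (kt N c) = c)
    \<and> (\<forall>p \<ge> 1. \<forall>c \<in> (Kmod N p :: (_ \<Rightarrow> 'k) set). kt N (kd c) + kd (kt N c) = c)"
proof (intro conjI ballI allI impI)
  fix f :: "(nat \<Rightarrow> nat) \<Rightarrow> 'k"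
  assume f: "f \<in> Apoly N"
  have fin: "finite {a. f a \<noteq> 0}" using f unfolding Apoly_def by simp
  show "kd0 (tm1 f) = f"
  proof
    fix y
    have "kd0 (tm1 f) y = (\<Sum>a\<in>{a. f a \<noteq> 0}. f a * kd0 (bvec (a, {}, zmono)) y)"
      unfolding kd0_def tm1_def by (rule comp_lin[OF fin fin_bvec])
    also have "\<dots> = (\<Sum>a\<in>{a. f a \<noteq> 0}. f a * bvec a y)"
    proof (rule sum.cong[OF refl])
      fix a
      have "madd a zmono = a" by (simp add: fun_eq_iff madd_def zmono_def)
      then show "f a * kd0 (bvec (a, {}, zmono)) y = f a * bvec a y"
        by (simp add: kd0_def lin_ext_bvec)
    qed
    also have "\<dots> = f y" by (rule sum_bvec[OF fin]) simp
    finally show "kd0 (tm1 f) y = f y" .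
  qed
next
  fix c :: "(nat \<Rightarrow> nat) \<times> nat set \<times> (nat \<Rightarrow> nat) \<Rightarrow> 'k"
  assume c: "c \<in> Kmod N 0"
  have fin: "finite {b. c b \<noteq> 0}" using c unfolding Kmod_def by simp
  show "tm1 (kd0 c) + kd (kt N c) = c"
  proof
    fix y
    have f0: "finite {z. ((case b of (a, J, b) \<Rightarrow> bvec (madd a b)) z :: 'k) \<noteq> 0}" for b
      by (cases b) (simp add: fin_bvec)
    have "(tm1 (kd0 c) + kd (kt N c)) y = (\<Sum>b\<in>{b. c b \<noteq> 0}. c b * tm1 ((\<lambda>x. case x of (a, J, b) \<Rightarrow> bvec (madd a b)) b) y)
       + (\<Sum>b\<in>{b. c b \<noteq> 0}. c b * kd (kt_basis N b) y)"
      unfolding plus_fun_def kd0_def kt_def tm1_def kd_def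
      by (simp only: comp_lin[OF fin f0] comp_lin[OF fin fin_kt_basis])
    also have "\<dots> = (\<Sum>b\<in>{b. c b \<noteq> 0}. c b * bvec b y)"
      unfolding sum.distrib[symmetric] distrib_left[symmetric]
    proof (rule sum.cong[OF refl])
      fix b assume "b \<in> {b. c b \<noteq> 0}"
      moreover obtain a J l where b: "b = (a,J,l)" by (cases b) auto
      ultimately have "c (a,J,l) \<noteq> 0" by simp
      then have a: "J \<subseteq> {1..N}" "card J = 0" "l \<in> monoms N" using c unfolding Kmod_def by blast+
      then have "J = {}" using finite_subset[OF a(1)] by auto
      then show "c b * (tm1 (case b of (a, J, b) \<Rightarrow> bvec (madd a b)) y + kd (kt_basis N b) y) = c b * bvec b y"
        using BI2[where 'k='k, of N l a y] monomsD[OF a(3)] unfolding b by (simp add: tm1_def lin_ext_bvec)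
    qed
    also have "\<dots> = c y" by (rule sum_bvec[OF fin]) simp
    finally show "(tm1 (kd0 c) + kd (kt N c)) y = c y" .
  qed
next
  fix p :: nat and c :: "(nat \<Rightarrow> nat) \<times> nat set \<times> (nat \<Rightarrow> nat) \<Rightarrow> 'k"
  assume p: "1 \<le> p" and c: "c \<in> Kmod N p"
  have fin: "finite {b. c b \<noteq> 0}" using c unfolding Kmod_def by simp
  show "kt N (kd c) + kd (kt N c) = c"
  proof
    fix y
    have "(kt N (kd c) + kd (kt N c)) y = (\<Sum>b\<in>{b. c b \<noteq> 0}. c b * kt N (kd_basis b) y)
       + (\<Sum>b\<in>{b. c b \<noteq> 0}. c b * kd (kt_basis N b) y)"
      unfolding plus_fun_def kt_def kd_def
      by (simp only: comp_lin[OF fin fin_kd_basis] comp_lin[OF fin fin_kt_basis])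
    also have "\<dots> = (\<Sum>b\<in>{b. c b \<noteq> 0}. c b * bvec b y)"
      unfolding sum.distrib[symmetric] distrib_left[symmetric]
    proof (rule sum.cong[OF refl])
      fix b assume "b \<in> {b. c b \<noteq> 0}"
      moreover obtain a J l where b: "b = (a,J,l)" by (cases b) auto
      ultimately have "c (a,J,l) \<noteq> 0" by simp
      then have a: "J \<subseteq> {1..N}" "card J = p" "l \<in> monoms N" using c unfolding Kmod_def by blast+
      have fJ: "finite J" using finite_subset[OF a(1)] by simp
      have "J \<noteq> {}" using a(2) p by auto
      then show "c b * (kt N (kd_basis b) y + kd (kt_basis N b) y) = c b * bvec b y"
        using BI3[where 'k='k, OF fJ a(1) _ conjunct1[OF monomsD[OF a(3)]], of a y] unfolding b kt_def by simp
    qed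
    also have "\<dots> = c y" by (rule sum_bvec[OF fin]) simp
    finally show "(kt N (kd c) + kd (kt N c)) y = c y" .
  qed
qed

end
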